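(* For any $1\le\alpha\le\mathcal N$ and $g\in\mathbb C[x_1^{\pm1},\dots,x_\alpha^{\pm1}]^{S(\alpha)}$, \[\iota\big(\Phi(\widetilde E_\alpha(g))\big)=\theta^{\alpha(\mathcal N-\alpha)}\,\mathcal A_\alpha(P),\qquad P(x_1,\dots,x_\alpha)=g(\mathfrak q^{-1/2}x_1^{-1},\dots,\mathfrak q^{-1/2}x_\alpha^{-1}).\]
   Context: Let $\mathfrak q,\mathfrak t\in\mathbb C^\times$ with $q_1=\mathfrak q$, $q_2=1/\mathfrak t$, $q_3=\mathfrak t/\mathfrak q$ not roots of unity; fix square roots $\theta=\mathfrak t^{1/2}$, $\mathfrak q^{1/2}$, $q_2^{1/2}$. Fix $\mathcal N\ge1$. $\widetilde{\mathcal A}$ is the $\mathbb C$-algebra generated by $D_r^{\pm1},w_r^{\pm1}$ ($1\le r\le\mathcal N$), all commuting except $D_rw_s=q_1^{\delta_{rs}}w_sD_r$, localized at $w_r-q_1^mw_s$ ($r\ne s$). $\mathcal B$ is the $\mathbb C$-algebra generated by $x_i^{\pm1},\Gamma_i^{\pm1}$ ($1\le i\le\mathcal N$), all commuting except $\Gamma_ix_i=\mathfrak q x_i\Gamma_i$, localized at $x_i-\mathfrak q^mx_j$ ($i\ne j$); $\iota:\widetilde{\mathcal A}\to\mathcal B$ is the isomorphism $w_i^{\pm1}\mapsto x_i^{\mp1}\mathfrak q^{\mp1/2}$, $D_i^{\pm1}\mapsto\Gamma_i^{\mp1}$. Let $\zeta(z/w)=\frac{\prod_{i=1}^3(z-q_i^{-1}w)}{(z-w)^3}$,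 $\varphi(z/w)=\frac{(q_1^{1/2}z-q_1^{-1/2}w)(q_2^{1/2}z-q_2^{-1/2}w)}{(z-w)^2}$. $\mathbb S=\bigoplus_k\mathbb S_k$, $\mathbb S_k$ the space of $f/\prod_{r\ne s}(x_r-x_s)$ with $f$ a symmetric complex Laurent polynomial in $x_1,\dots,x_k$, with shuffle product $F\star G=\frac{1}{k!\ell!}\mathrm{Sym}(F(x_1..x_k)G(x_{k+1}..x_{k+\ell})\prod_{r\le k<r'}\zeta(x_r/x_{r'}))$. With $Y_r(z)=\frac{-1}{1-q_1^{-1}}\prod_{s\ne r}\frac{z-w_sq_2^{-1}}{z-w_s}$, the map $\Phi:\mathbb S\to\widetilde{\mathcal A}$ is defined on $E\in\mathbb S_k$ by $\Phi(E)=\sum_{m_1+\dots+m_{\mathcal N}=k}\{\prod_r\prod_{p\le m_r}Y_r(w_rq_1^{-(p-1)})\cdot E(\{w_rq_1^{-(p-1)}\}_r^{p\le m_r})\prod_r\prod_{p_1<p_2\le m_r}\zeta^{-1}(\frac{w_rq_1^{-(p_1-1)}}{w_rq_1^{-(p_2-1)}})\prod_{r_1\ne r_2}\prod_{p_1\le m_{r_1},p_2\le m_{r_2}}\varphi^{-1}(\frac{w_{r_1}q_1^{-(p_1-1)}}{w_{r_2}q_1^{-(p_2-1)}})\prod_rD_r^{-m_r}\}$ ($m_r\in\mathbb N$). $\widetilde E_\alpha(g)=q_3^{\frac{\alpha-\alpha^2}2}(q_1^{-1}-1)^\alpha\frac{\prod_{1\le r\ne s\le\alpha}(x_r-q_1^{-1}x_s)\,g(x_1,\dots,x_\alpha)}{\prod_{1\le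 r\ne s\le\alpha}(x_r-x_s)}\in\mathbb S_\alpha$. For a symmetric Laurent polynomial $P$ in $\alpha$ variables, the generalized Macdonald operator is $\mathcal A_\alpha(P)=\frac{1}{\alpha!(\mathcal N-\alpha)!}\mathrm{Sym}_{x_1,\dots,x_{\mathcal N}}\Big(P(x_1,\dots,x_\alpha)\prod_{1\le i\le\alpha<j\le\mathcal N}\frac{\theta x_i-\theta^{-1}x_j}{x_i-x_j}\Gamma_1\cdots\Gamma_\alpha\Big)\in\mathcal B$, where Sym permutes the indices $1,\dots,\mathcal N$ of the $x_i$ and $\Gamma_i$ simultaneously. *)

theory Defs
  imports "HOL-Combinatorics.Permutations" Complex_Main
begin

text \<open>Parameters: q = frak q, t = frak t, qh = q^(1/2), th = theta = t^(1/2),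
  q2h = q_2^(1/2).  Hence q_1 = q, q_2 = 1/t, q_3 = t/q, and q_1^(-1) = 1/q, q_2^(-1) = t,
  q_3^(-1) = q/t.  Indices of variables are 0-based: w_0..w_(N-1), x_0..x_(N-1).

  Elements of the (localized) difference-operator algebras are represented by their unique
  normal form sum_e c_e(vars) * Mon^e (coefficient to the left of the monomial in D resp. Gamma):
  an operator is the map  e \<mapsto> c_e,  e :: nat => int the exponent vector, c_e a
  function of the commuting variables.\<close>

type_synonym op_alg = "(nat \<Rightarrow> int) \<Rightarrow> (nat \<Rightarrow> complex) \<Rightarrow> complex"

definition zeta :: "complex \<Rightarrow> complex \<Rightarrow> complex \<Rightarrow> complex \<Rightarrow> complex" where
  "zeta q t z w = ((z - (1/q) * w) * (z - t * w) * (z - (q/t) * w)) / (z - w)^3"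

definition phi :: "complex \<Rightarrow> complex \<Rightarrow> complex \<Rightarrow> complex \<Rightarrow> complex" where
  "phi qh q2h z w = ((qh * z - w / qh) * (q2h * z - w / q2h)) / (z - w)^2"

definition Yfun :: "nat \<Rightarrow> complex \<Rightarrow> complex \<Rightarrow> (nat \<Rightarrow> complex) \<Rightarrow> nat \<Rightarrow> complex \<Rightarrow> complex" where
  "Yfun N q t w r z = (-1 / (1 - 1/q)) * (\<Prod>s\<in>{..<N} - {r}. (z - w s * t) / (z - w s))"

text \<open>pt q w r p = w_r q_1^{-(p-1)} with 0-based p.\<close>
definition pt :: "complex \<Rightarrow> (nat \<Rightarrow> complex) \<Rightarrow> nat \<Rightarrow> nat \<Rightarrow> complex" where
  "pt q w r p = w r * q powi (- int p)"

text \<open>The evaluation points {w_r q_1^{-(p-1)}}, listed in some order (E is symmetric).\<close>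
definition pts :: "nat \<Rightarrow> complex \<Rightarrow> (nat \<Rightarrow> nat) \<Rightarrow> (nat \<Rightarrow> complex) \<Rightarrow> complex list" where
  "pts N q m w = concat (map (\<lambda>r. map (\<lambda>p. pt q w r p) [0..<m r]) [0..<N])"

definition Phi_term :: "nat \<Rightarrow> complex \<Rightarrow> complex \<Rightarrow> complex \<Rightarrow> complex \<Rightarrow>
    (complex list \<Rightarrow> complex) \<Rightarrow> (nat \<Rightarrow> nat) \<Rightarrow> (nat \<Rightarrow> complex) \<Rightarrow> complex" where
  "Phi_term N q t qh q2h E m w =
     (\<Prod>r<N. \<Prod>p<m r. Yfun N q t w r (pt q w r p))
     * E (pts N q m w)
     * (\<Prod>r<N. \<Prod>p1<m r. \<Prod>p2\<in>{p1<..<m r}. 1 / zeta q t (pt q w r p1) (pt q w r p2))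
     * (\<Prod>r1<N. \<Prod>r2\<in>{..<N} - {r1}. \<Prod>p1<m r1. \<Prod>p2<m r2.
          1 / phi qh q2h (pt q w r1 p1) (pt q w r2 p2))"

text \<open>Phi(E) for E in S_k: coefficient of D^d (d = -m) as a function of w.\<close>
definition Phi :: "nat \<Rightarrow> complex \<Rightarrow> complex \<Rightarrow> complex \<Rightarrow> complex \<Rightarrow> nat \<Rightarrow>
    (complex list \<Rightarrow> complex) \<Rightarrow> op_alg" where
  "Phi N q t qh q2h k E = (\<lambda>d w.
     if (\<forall>r. (r < N \<longrightarrow> d r \<le> 0) \<and> (N \<le> r \<longrightarrow> d r = 0)) \<and> (\<Sum>r<N. nat (- d r)) = k
     then Phi_term N q t qh q2h E (\<lambda>r. nat (- d r)) w else 0)"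

definition Etilde :: "complex \<Rightarrow> complex \<Rightarrow> nat \<Rightarrow> (complex list \<Rightarrow> complex) \<Rightarrow> complex list \<Rightarrow> complex" where
  "Etilde q t \<alpha> g xs =
     (t/q) powi ((int \<alpha> - int \<alpha>^2) div 2) * (1/q - 1)^\<alpha>
     * (\<Prod>r<\<alpha>. \<Prod>s\<in>{..<\<alpha>} - {r}. (xs!r - (1/q) * xs!s)) * g xs
     / (\<Prod>r<\<alpha>. \<Prod>s\<in>{..<\<alpha>} - {r}. (xs!r - xs!s))"

text \<open>iota: w_i \<mapsto> x_i^{-1} q^{-1/2}, D_i^{\<plusminus>1} \<mapsto> Gamma_i^{\<mp>1};
  on normal forms: c(w) D^d \<mapsto> c(q^{-1/2}/x) Gamma^{-d}.\<close>
definition iota :: "complex \<Rightarrow> op_alg \<Rightarrow> op_alg" where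
  "iota qh A = (\<lambda>e x. A (\<lambda>i. - e i) (\<lambda>i. 1 / (qh * x i)))"

definition Mac_op :: "nat \<Rightarrow> complex \<Rightarrow> nat \<Rightarrow> (complex list \<Rightarrow> complex) \<Rightarrow> op_alg" where
  "Mac_op N th \<alpha> P = (\<lambda>e x. (1 / (fact \<alpha> * fact (N - \<alpha>))) *
     (\<Sum>\<sigma>\<in>{\<sigma>. \<sigma> permutes {..<N}}.
        if e = (\<lambda>i. if i \<in> \<sigma> ` {..<\<alpha>} then 1 else 0)
        then P (map (\<lambda>i. x (\<sigma> i)) [0..<\<alpha>])
             * (\<Prod>i<\<alpha>. \<Prod>j\<in>{\<alpha>..<N}. (th * x (\<sigma> i) - x (\<sigma> j) / th) / (x (\<sigma> i) - x (\<sigma> j)))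
        else 0))"

text \<open>Generic points of (C^x)^N: all localized denominators are nonzero there; the set is dense,
  so equality of rational coefficients there is equality in the algebra.\<close>
definition generic_pt :: "nat \<Rightarrow> complex \<Rightarrow> complex \<Rightarrow> (nat \<Rightarrow> complex) \<Rightarrow> bool" where
  "generic_pt N q t x \<longleftrightarrow> (\<forall>i<N. x i \<noteq> 0) \<and>
     (\<forall>i<N. \<forall>j<N. i \<noteq> j \<longrightarrow> (\<forall>a b :: int. x i \<noteq> q powi a * t powi b * x j))"

definition op_eq :: "nat \<Rightarrow> complex \<Rightarrow> complex \<Rightarrow> op_alg \<Rightarrow> op_alg \<Rightarrow> bool" where
  "op_eq N q t A B \<longleftrightarrow> (\<forall>e x. generic_pt N q t x \<longrightarrow> A e x = B e x)"

definition sym_laurent :: "nat \<Rightarrow> (complex list \<Rightarrow> complex) \<Rightarrow> bool" where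
  "sym_laurent \<alpha> g \<longleftrightarrow>
     (\<exists>S c. finite S \<and> (\<forall>xs. length xs = \<alpha> \<longrightarrow>
        g xs = (\<Sum>a\<in>S. c a * (\<Prod>i<\<alpha>. (xs!i) powi (a i))))) \<and>
     (\<forall>xs \<sigma>. length xs = \<alpha> \<longrightarrow> \<sigma> permutes {..<\<alpha>} \<longrightarrow>
        g (map (\<lambda>i. xs ! \<sigma> i) [0..<\<alpha>]) = g xs)"

end

theory Submission
  imports Defs "HOL-Library.Multiset"
begin

lemma reidx_pairs:
  assumes "distinct ls"
  shows "(\<Prod>r<length ls. \<Prod>s\<in>{..<length ls}-{r}. F (ls!r) (ls!s)) =
         (\<Prod>a\<in>set ls. \<Prod>b\<in>set ls-{a}. F a b)"
proof -
  have b: "bij_betw ((!) ls) {..<length ls} (set ls)" by (rule bij_betw_nth[OF assms]) auto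
  have "(\<Prod>s\<in>{..<length ls}-{r}. F (ls!r) (ls!s)) = (\<Prod>b\<in>set ls-{ls!r}. F (ls!r) b)"
    if "r < length ls" for r
  proof -
    have "bij_betw ((!) ls) ({..<length ls}-{r}) (set ls-{ls!r})"
      by (rule bij_betw_DiffI[OF b, of "{r}" "{ls!r}"]) (use that in \<open>auto simp: bij_betw_def\<close>)
    then show ?thesis by (rule prod.reindex_bij_betw)
  qed
  then have "(\<Prod>r<length ls. \<Prod>s\<in>{..<length ls}-{r}. F (ls!r) (ls!s)) =
      (\<Prod>r<length ls. (\<lambda>a. \<Prod>b\<in>set ls-{a}. F a b) (ls!r))" by (intro prod.cong) auto
  also have "\<dots> = (\<Prod>a\<in>set ls. \<Prod>b\<in>set ls-{a}. F a b)" by (rule prod.reindex_bij_betw[OF b])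
  finally show ?thesis .
qed

lemma len_pts: "length (pts N q m w) = (\<Sum>r<N. m r)"
  by (induct N) (auto simp: pts_def)

lemma pts01: assumes "\<And>r. m r = (if r \<in> S then 1 else 0)"
  shows "pts N q m w = map w (filter (\<lambda>r. r \<in> S) [0..<N])"
  by (induct N) (auto simp: pts_def assms pt_def)

lemma sum_ind: "finite A \<Longrightarrow> (\<Sum>r\<in>A. nat (if r \<in> X then 1 else 0)) = card (A \<inter> X)"
  by (induct rule: finite_induct) (auto simp: Int_insert_left)

lemma pni: "p permutes S \<Longrightarrow> x \<notin> S \<Longrightarrow> p x = x"
  by (auto simp: permutes_def)

lemma card_perm_fix:
  assumes "finite A" "finite B" "A \<inter> B = {}"
  shows "card {\<tau>. \<tau> permutes (A \<union> B) \<and> \<tau> ` A = A} = fact (card A) * fact (card B)"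
proof -
  let ?f = "\<lambda>(p1::'a\<Rightarrow>'a, p2). p1 \<circ> p2"
  have eq: "{\<tau>. \<tau> permutes (A \<union> B) \<and> \<tau> ` A = A} = ?f ` ({p. p permutes A} \<times> {p. p permutes B})"
  proof (intro equalityI subsetI)
    fix \<tau> assume "\<tau> \<in> {\<tau>. \<tau> permutes (A \<union> B) \<and> \<tau> ` A = A}"
    then have t: "\<tau> permutes (A \<union> B)" "\<tau> ` A = A" by auto
    have inj: "inj \<tau>" using t(1) permutes_inj by blast
    have tB: "\<tau> ` B = B"
    proof -
      have "\<tau> ` (A \<union> B) = A \<union> B" using t(1) permutes_image by blast
      then have "\<tau> ` ((A \<union> B) - A) = (A \<union> B) - A" using image_set_diff[OF inj] t(2) by metis
      moreover have "(A \<union> B) - A = B" using assms(3) by blast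
      ultimately show ?thesis by simp
    qed
    have p1: "restrict_id \<tau> A permutes A"
      by (rule bij_imp_permutes) (use t(2) inj in \<open>auto simp: bij_betw_def inj_on_def restrict_id_def\<close>)
    have p2: "restrict_id \<tau> B permutes B"
      by (rule bij_imp_permutes) (use tB inj in \<open>auto simp: bij_betw_def inj_on_def restrict_id_def\<close>)
    have "\<tau> = restrict_id \<tau> A \<circ> restrict_id \<tau> B"
    proof
      fix x show "\<tau> x = (restrict_id \<tau> A \<circ> restrict_id \<tau> B) x"
      proof (cases "x \<in> B")
        case True
        then have "\<tau> x \<in> B" using tB by blast
        then have "\<tau> x \<notin> A" using assms(3) by blast
        then show ?thesis using True by (simp add: restrict_id_def)
      next
        case False
        then show ?thesis using t(1) by (auto simp: restrict_id_def pni)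
      qed
    qed
    then show "\<tau> \<in> ?f ` ({p. p permutes A} \<times> {p. p permutes B})"
      using p1 p2 by (auto intro!: image_eqI[where x="(restrict_id \<tau> A, restrict_id \<tau> B)"])
  next
    fix \<tau> assume "\<tau> \<in> ?f ` ({p. p permutes A} \<times> {p. p permutes B})"
    then obtain p1 p2 where p: "p1 permutes A" "p2 permutes B" "\<tau> = p1 \<circ> p2" by auto
    have "\<tau> permutes (A \<union> B)"
      using p permutes_compose permutes_subset by (metis sup_ge1 sup_ge2)
    moreover have "p2 ` A = A"
    proof -
      have "\<forall>x\<in>A. p2 x = x" using p(2) assms(3) by (auto simp: permutes_def)
      then show ?thesis by auto
    qed
    then have "\<tau> ` A = A" using p permutes_image by (metis image_comp)
    ultimately show "\<tau> \<in> {\<tau>. \<tau> permutes (A \<union> B) \<and> \<tau> ` A = A}" by auto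
  qed
  have inj: "inj_on ?f ({p. p permutes A} \<times> {p. p permutes B})"
  proof (rule inj_onI, clarsimp)
    fix p1 p2 p1' p2'
    assume a: "p1 permutes A" "p2 permutes B" "p1' permutes A" "p2' permutes B" "p1 \<circ> p2 = p1' \<circ> p2'"
    have e: "p1 (p2 x) = p1' (p2' x)" for x using a(5) by (metis comp_apply)
    have "p1 x = p1' x" for x
    proof (cases "x \<in> A")
      case True
      then have "x \<notin> B" using assms(3) by blast
      then show ?thesis using e[of x] a(2,4) by (simp add: pni)
    next
      case False then show ?thesis using a(1,3) by (simp add: pni)
    qed
    moreover have "p2 x = p2' x" for x
    proof (cases "x \<in> B")
      case True
      have "p2 x \<in> B" using a(2) True by (simp add: permutes_in_image)
      moreover have "p2' x \<in> B" using a(4) True by (simp add: permutes_in_image)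
      ultimately have "p2 x \<notin> A" "p2' x \<notin> A" using assms(3) by auto
      then show ?thesis using e[of x] a(1,3) by (simp add: pni)
    next
      case False then show ?thesis using a(2,4) by (simp add: pni)
    qed
    ultimately show "p1 = p1' \<and> p2 = p2'" by auto
  qed
  show ?thesis unfolding eq card_image[OF inj] card_cartesian_product
    using card_permutations[OF refl assms(1)] card_permutations[OF refl assms(2)] by simp
qed

lemma card_perm_img:
  assumes S: "S \<subseteq> {..<N}" "card S = \<alpha>" and aN: "\<alpha> \<le> N"
  shows "card {\<sigma>. \<sigma> permutes {..<N} \<and> \<sigma> ` {..<\<alpha>} = S} = fact \<alpha> * fact (N - \<alpha>)"
proof -
  have fS: "finite S" using S finite_subset by blast
  obtain b1 where b1: "bij_betw b1 {..<\<alpha>} S"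
    using finite_same_card_bij[of "{..<\<alpha>}" S] fS S by auto
  have "card ({..<N} - S) = N - \<alpha>" using S fS by (simp add: card_Diff_subset)
  then obtain b2 where b2: "bij_betw b2 {\<alpha>..<N} ({..<N} - S)"
    using finite_same_card_bij[of "{\<alpha>..<N}" "{..<N} - S"] by auto
  define f0 where "f0 = (\<lambda>x. if x < \<alpha> then b1 x else if x < N then b2 x else x)"
  have "bij_betw (\<lambda>x. if x \<in> {..<\<alpha>} then b1 x else b2 x) ({..<\<alpha>} \<union> {\<alpha>..<N}) (S \<union> ({..<N} - S))"
    by (rule bij_betw_disjoint_Un[OF b1 b2]) auto
  then have "bij_betw f0 ({..<\<alpha>} \<union> {\<alpha>..<N}) (S \<union> ({..<N} - S))"
    by (rule bij_betw_cong[THEN iffD1, rotated]) (auto simp: f0_def)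
  moreover have "{..<\<alpha>} \<union> {\<alpha>..<N} = {..<N}" "S \<union> ({..<N} - S) = {..<N}" using S aN by auto
  ultimately have "bij_betw f0 {..<N} {..<N}" by simp
  then have f0p: "f0 permutes {..<N}" by (rule bij_imp_permutes) (use aN in \<open>auto simp: f0_def\<close>)
  have f0A: "f0 ` {..<\<alpha>} = S" using b1 by (auto simp: f0_def bij_betw_def image_def)
  have injf: "inj f0" using f0p permutes_inj by blast
  have U: "{..<\<alpha>} \<union> {\<alpha>..<N} = {..<N}" using aN by auto
  have eq: "{\<sigma>. \<sigma> permutes {..<N} \<and> \<sigma> ` {..<\<alpha>} = S} =
    (\<lambda>\<tau>. f0 \<circ> \<tau>) ` {\<tau>. \<tau> permutes ({..<\<alpha>} \<union> {\<alpha>..<N}) \<and> \<tau> ` {..<\<alpha>} = {..<\<alpha>}}"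
  proof (intro equalityI subsetI)
    fix \<sigma> assume "\<sigma> \<in> {\<sigma>. \<sigma> permutes {..<N} \<and> \<sigma> ` {..<\<alpha>} = S}"
    then have s: "\<sigma> permutes {..<N}" "\<sigma> ` {..<\<alpha>} = S" by auto
    have "inv f0 \<circ> \<sigma> permutes {..<N}" using s(1) permutes_inv[OF f0p] permutes_compose by blast
    moreover have "(inv f0 \<circ> \<sigma>) ` {..<\<alpha>} = {..<\<alpha>}"
      by (metis image_comp s(2) f0A image_inv_f_f[OF injf])
    moreover have "\<sigma> = f0 \<circ> (inv f0 \<circ> \<sigma>)"
      using permutes_inverses(1)[OF f0p] by (auto simp: fun_eq_iff)
    ultimately show "\<sigma> \<in> (\<lambda>\<tau>. f0 \<circ> \<tau>) ` {\<tau>. \<tau> permutes ({..<\<alpha>} \<union> {\<alpha>..<N}) \<and> \<tau> ` {..<\<alpha>} = {..<\<alpha>}}"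
      unfolding U by blast
  next
    fix \<sigma> assume "\<sigma> \<in> (\<lambda>\<tau>. f0 \<circ> \<tau>) ` {\<tau>. \<tau> permutes ({..<\<alpha>} \<union> {\<alpha>..<N}) \<and> \<tau> ` {..<\<alpha>} = {..<\<alpha>}}"
    then obtain \<tau> where t: "\<tau> permutes {..<N}" "\<tau> ` {..<\<alpha>} = {..<\<alpha>}" "\<sigma> = f0 \<circ> \<tau>" unfolding U by auto
    have "\<sigma> permutes {..<N}" using t f0p permutes_compose by blast
    moreover have "\<sigma> ` {..<\<alpha>} = S" using t f0A by (metis image_comp)
    ultimately show "\<sigma> \<in> {\<sigma>. \<sigma> permutes {..<N} \<and> \<sigma> ` {..<\<alpha>} = S}" by auto
  qed
  have inj: "inj_on (\<lambda>\<tau>. f0 \<circ> \<tau>) X" for X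
    by (rule inj_onI) (metis injf fun.inj_map inj_eq)
  show ?thesis unfolding eq card_image[OF inj] proof -
    have "{..<\<alpha>} \<inter> {\<alpha>..<N} = {}" by auto
    then show "card {\<tau>. \<tau> permutes ({..<\<alpha>} \<union> {\<alpha>..<N}) \<and> \<tau> ` {..<\<alpha>} = {..<\<alpha>}} = fact \<alpha> * fact (N - \<alpha>)"
      using card_perm_fix[of "{..<\<alpha>}" "{\<alpha>..<N}"] by simp
  qed
qed

lemma reidx_pairs_map:
  assumes "distinct ls" "length ls = n"
  shows "(\<Prod>r<n. \<Prod>s\<in>{..<n}-{r}. F (map w ls ! r) (map w ls ! s)) =
         (\<Prod>a\<in>set ls. \<Prod>b\<in>set ls-{a}. F (w a) (w b))"
proof -
  have "(\<Prod>r<n. \<Prod>s\<in>{..<n}-{r}. F (map w ls ! r) (map w ls ! s)) =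
        (\<Prod>r<length ls. \<Prod>s\<in>{..<length ls}-{r}. (\<lambda>a b. F (w a) (w b)) (ls ! r) (ls ! s))"
    using assms(2) by (intro prod.cong) auto
  also have "\<dots> = (\<Prod>a\<in>set ls. \<Prod>b\<in>set ls-{a}. F (w a) (w b))"
    by (rule reidx_pairs[OF assms(1)])
  finally show ?thesis .
qed

lemma prod_ifS: "finite A \<Longrightarrow> S \<subseteq> A \<Longrightarrow> (\<Prod>r\<in>A. if r \<in> S then f r else 1) = (\<Prod>r\<in>S. f r)"
proof -
  assume "finite A" "S \<subseteq> A"
  then have "(\<Prod>r\<in>A. if r \<in> S then f r else 1) = (\<Prod>r\<in>{r\<in>A. r \<in> S}. f r)"
    by (simp add: prod.inter_filter)
  also have "{r\<in>A. r \<in> S} = S" using \<open>S \<subseteq> A\<close> by auto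
  finally show ?thesis .
qed

lemma in_pts: "r < N \<Longrightarrow> p < m r \<Longrightarrow> pt q w r p \<in> set (pts N q m w)"
  unfolding pts_def by (auto intro!: bexI[of _ r])

lemma pw0: fixes A B D qh q2h :: complex
  assumes "A \<noteq> 0" "B \<noteq> 0" "D \<noteq> 0" "qh \<noteq> 0" "q2h \<noteq> 0"
  shows "B / q2h^2 / D * (A / qh^2 / D) * (1 / (A / qh * (B / q2h) / D^2)) = 1/(qh*q2h)"
  using assms by (simp add: field_simps power2_eq_square)

lemma pw1:
  fixes qh q2h u v :: complex
  assumes "qh \<noteq> 0" "q2h \<noteq> 0" "u \<noteq> v" "qh^2 * u \<noteq> v" "q2h^2 * u \<noteq> v"
  shows "(u - v * (1/q2h^2)) / (u - v) * ((u - 1/(qh^2) * v) / (u - v)) * (1 / phi qh q2h u v) = 1/(qh*q2h)"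
proof -
  have a: "u - v \<noteq> 0" "qh^2 * u - v \<noteq> 0" "q2h^2 * u - v \<noteq> 0" using assms by auto
  have b: "qh * u - v / qh = (qh^2 * u - v) / qh" using assms(1) by (simp add: field_simps power2_eq_square)
  have c: "q2h * u - v / q2h = (q2h^2 * u - v) / q2h" using assms(2) by (simp add: field_simps power2_eq_square)
  have d: "u - v * (1/q2h^2) = (q2h^2 * u - v) / q2h^2" using assms(2) by (simp add: field_simps)
  have e: "u - 1/(qh^2) * v = (qh^2 * u - v) / qh^2" using assms(1) by (simp add: field_simps)
  show ?thesis unfolding phi_def b c d e using pw0[OF a(2) a(3) a(1) assms(1,2)] by simp
qed

theorem proposition7p9:
  fixes q t qh th q2h :: complex and N \<alpha> :: nat and g :: "complex list \<Rightarrow> complex"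
  assumes "q \<noteq> 0" and "t \<noteq> 0"
    and "\<forall>n>0. q ^ n \<noteq> 1" and "\<forall>n>0. (1/t) ^ n \<noteq> 1" and "\<forall>n>0. (t/q) ^ n \<noteq> 1"
    and "qh^2 = q" and "th^2 = t" and "q2h^2 = 1/t"
    and "1 \<le> \<alpha>" and "\<alpha> \<le> N"
    and "sym_laurent \<alpha> g"
  shows "op_eq N q t
           (iota qh (Phi N q t qh q2h \<alpha> (Etilde q t \<alpha> g)))
           (\<lambda>e x. th ^ (\<alpha> * (N - \<alpha>)) *
              Mac_op N th \<alpha> (\<lambda>xs. g (map (\<lambda>y. 1 / (qh * y)) xs)) e x)"
proof (unfold op_eq_def, intro allI impI)
  fix e :: "nat \<Rightarrow> int" and x :: "nat \<Rightarrow> complex"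
  assume gen: "generic_pt N q t x"
  note q0 = assms(1) and t0 = assms(2)
  have q1: "q \<noteq> 1" using assms(3) by (metis power_one_right zero_less_one)
  have qh0: "qh \<noteq> 0" using assms(6) q0 by auto
  have th0: "th \<noteq> 0" using assms(7) t0 by auto
  have q2h0: "q2h \<noteq> 0" using assms(8) t0 by auto
  have sym: "\<And>xs \<sigma>. length xs = \<alpha> \<Longrightarrow> \<sigma> permutes {..<\<alpha>} \<Longrightarrow> g (map (\<lambda>i. xs ! \<sigma> i) [0..<\<alpha>]) = g xs"
    using assms(11) unfolding sym_laurent_def by blast
  have gx: "\<And>i. i < N \<Longrightarrow> x i \<noteq> 0" using gen unfolding generic_pt_def by blast
  have gxx: "\<And>i j a b. i < N \<Longrightarrow> j < N \<Longrightarrow> i \<noteq> j \<Longrightarrow> x i \<noteq> q powi a * t powi b * x j"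
    using gen unfolding generic_pt_def by blast
  have gx1: "x i \<noteq> x j" "x i \<noteq> q * x j" "x i \<noteq> t * x j" if "i < N" "j < N" "i \<noteq> j" for i j
    using gxx[OF that, of 0 0] gxx[OF that, of 1 0] gxx[OF that, of 0 1] by auto
  define w where "w = (\<lambda>i. 1 / (qh * x i))"
  define cond where "cond = ((\<forall>r. (r < N \<longrightarrow> 0 \<le> e r) \<and> (N \<le> r \<longrightarrow> e r = 0)) \<and> (\<Sum>r<N. nat (e r)) = \<alpha>)"
  define m where "m = (\<lambda>r. nat (e r))"
  define ind where "ind = (\<lambda>X::nat set. (\<lambda>i. if i \<in> X then 1 else 0 :: int))"
  define T where "T = (\<lambda>\<sigma>::nat\<Rightarrow>nat. g (map (\<lambda>y. 1 / (qh * y)) (map (\<lambda>i. x (\<sigma> i)) [0..<\<alpha>])) *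
     (\<Prod>i<\<alpha>. \<Prod>j\<in>{\<alpha>..<N}. (th * x (\<sigma> i) - x (\<sigma> j) / th) / (x (\<sigma> i) - x (\<sigma> j))))"
  have L: "iota qh (Phi N q t qh q2h \<alpha> (Etilde q t \<alpha> g)) e x =
      (if cond then Phi_term N q t qh q2h (Etilde q t \<alpha> g) m w else 0)"
    unfolding iota_def Phi_def cond_def m_def w_def by (simp only: minus_minus neg_le_0_iff_le neg_equal_0_iff_equal)
  have R: "Mac_op N th \<alpha> (\<lambda>xs. g (map (\<lambda>y. 1 / (qh * y)) xs)) e x =
     1 / (fact \<alpha> * fact (N - \<alpha>)) * (\<Sum>\<sigma>\<in>{\<sigma>. \<sigma> permutes {..<N}}. if e = ind (\<sigma> ` {..<\<alpha>}) then T \<sigma> else 0)"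
    unfolding Mac_op_def T_def ind_def by simp
  have indcond: "cond \<and> (\<forall>r. e r \<le> 1)" if "\<sigma> permutes {..<N}" "e = ind (\<sigma> ` {..<\<alpha>})" for \<sigma>
  proof -
    have sub: "\<sigma> ` {..<\<alpha>} \<subseteq> {..<N}" using that(1) assms(10) permutes_image[OF that(1)] by auto
    have card: "card (\<sigma> ` {..<\<alpha>}) = \<alpha>"
      using permutes_inj[OF that(1)] by (simp add: card_image inj_on_subset)
    have "(\<Sum>r<N. nat (e r)) = card ({..<N} \<inter> \<sigma> ` {..<\<alpha>})" unfolding that(2) ind_def by (rule sum_ind) simp
    also have "\<dots> = \<alpha>" using sub card by (simp add: Int_absorb1)
    finally show ?thesis using sub unfolding cond_def that(2) ind_def by auto
  qed
  show "iota qh (Phi N q t qh q2h \<alpha> (Etilde q t \<alpha> g)) e x =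
     th ^ (\<alpha> * (N - \<alpha>)) * Mac_op N th \<alpha> (\<lambda>xs. g (map (\<lambda>y. 1 / (qh * y)) xs)) e x"
  proof (cases "cond \<and> (\<forall>r. e r \<le> 1)")
    case False
    have R0: "Mac_op N th \<alpha> (\<lambda>xs. g (map (\<lambda>y. 1 / (qh * y)) xs)) e x = 0"
    proof -
      have "\<forall>\<sigma>\<in>{\<sigma>. \<sigma> permutes {..<N}}. (if e = ind (\<sigma> ` {..<\<alpha>}) then T \<sigma> else 0) = 0"
      proof
        fix \<sigma> assume "\<sigma> \<in> {\<sigma>. \<sigma> permutes {..<N}}"
        then have "e \<noteq> ind (\<sigma> ` {..<\<alpha>})" using indcond False by blast
        then show "(if e = ind (\<sigma> ` {..<\<alpha>}) then T \<sigma> else 0) = 0" by simp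
      qed
      then show ?thesis unfolding R by (simp only: sum.neutral) simp
    qed
    have "Phi_term N q t qh q2h (Etilde q t \<alpha> g) m w = 0" if c: cond
    proof -
      obtain r where r: "e r > 1" using False c by (meson not_le)
      have rN: "r < N" using c r unfolding cond_def by (metis leI less_irrefl zero_less_one less_trans)
      have mr: "1 < m r" using r unfolding m_def by simp
      define Ls where "Ls = pts N q m w"
      have len: "length Ls = \<alpha>" using c unfolding Ls_def len_pts cond_def m_def by simp
      have "pt q w r 1 \<in> set Ls" "pt q w r 0 \<in> set Ls" unfolding Ls_def using in_pts rN mr by auto
      then obtain i j where ij: "i < \<alpha>" "Ls ! i = pt q w r 1" "j < \<alpha>" "Ls ! j = pt q w r 0"
        by (metis in_set_conv_nth len)
      have wr: "w r \<noteq> 0" using gx[OF rN] qh0 by (simp add: w_def)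
      have "i \<noteq> j"
      proof
        assume "i = j"
        then have "w r / q = w r" using ij by (simp add: pt_def power_int_minus divide_inverse)
        then show False using wr q1 q0 by (simp add: field_simps)
      qed
      have "Ls ! i - 1 / q * Ls ! j = 0" using ij by (simp add: pt_def power_int_minus divide_inverse)
      then have "\<exists>s\<in>{..<\<alpha>}-{i}. Ls ! i - 1 / q * Ls ! s = 0" using ij \<open>i \<noteq> j\<close> by blast
      then have "(\<Prod>s\<in>{..<\<alpha>}-{i}. Ls ! i - 1 / q * Ls ! s) = 0" by simp
      then have "\<exists>r\<in>{..<\<alpha>}. (\<Prod>s\<in>{..<\<alpha>}-{r}. Ls ! r - 1 / q * Ls ! s) = 0" using ij by blast
      then have "(\<Prod>r<\<alpha>. \<Prod>s\<in>{..<\<alpha>} - {r}. Ls ! r - 1 / q * Ls ! s) = 0"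
        by simp
      then have "Etilde q t \<alpha> g Ls = 0" by (simp add: Etilde_def)
      then show ?thesis by (simp add: Phi_term_def Ls_def)
    qed
    then show ?thesis using L R0 by simp
  next
    case True
    then have c: cond and e1: "\<And>r. e r \<le> 1" by auto
    define S where "S = {r. r < N \<and> e r = 1}"
    have SU: "S \<subseteq> {..<N}" unfolding S_def by auto
    have eS: "e = ind S"
    proof
      fix r show "e r = ind S r"
      proof (cases "r < N")
        case True
        then have "0 \<le> e r" using c unfolding cond_def by auto
        then show ?thesis using e1[of r] unfolding ind_def S_def using True by auto
      next
        case False
        then show ?thesis using c unfolding cond_def ind_def S_def by auto
      qed
    qed
    have mS: "\<And>r. m r = (if r \<in> S then 1 else 0)" unfolding m_def eS ind_def by simp
    have cardS: "card S = \<alpha>"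
    proof -
      have "\<alpha> = (\<Sum>r<N. nat (e r))" using c unfolding cond_def by simp
      also have "\<dots> = card ({..<N} \<inter> S)" unfolding eS ind_def by (rule sum_ind) simp
      also have "\<dots> = card S" using SU by (simp add: Int_absorb1)
      finally show ?thesis by simp
    qed
    have fS: "finite S" using SU finite_subset by blast
    define ls where "ls = filter (\<lambda>r. r \<in> S) [0..<N]"
    have ls12: "distinct ls" "set ls = S" using SU by (auto simp: ls_def)
    have ls: "distinct ls" "set ls = S" "length ls = \<alpha>"
      using ls12 cardS distinct_card[of ls] by auto
    define G where "G = (\<lambda>a b. (th * x a - x b / th) / (x a - x b))"
    define C where "C = g (map w ls) * (\<Prod>a\<in>S. \<Prod>b\<in>{..<N}-S. G a b)"
    have TC: "T \<sigma> = C" if s: "\<sigma> permutes {..<N}" "\<sigma> ` {..<\<alpha>} = S" for \<sigma>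
    proof -
      have inj: "inj \<sigma>" using s(1) permutes_inj by blast
      have m1: "map (\<lambda>y. 1 / (qh * y)) (map (\<lambda>i. x (\<sigma> i)) [0..<\<alpha>]) = map w (map \<sigma> [0..<\<alpha>])"
        by (simp add: w_def)
      have d1: "distinct (map \<sigma> [0..<\<alpha>])" using inj by (simp add: distinct_map inj_on_subset[OF inj])
      have "mset (map \<sigma> [0..<\<alpha>]) = mset ls"
      proof -
        have "set (map \<sigma> [0..<\<alpha>]) = set ls" using s(2) ls(2) by (simp add: atLeast0LessThan)
        then show ?thesis using set_eq_iff_mset_eq_distinct[OF d1 ls(1)] by blast
      qed
      then have "mset (map w (map \<sigma> [0..<\<alpha>])) = mset (map w ls)" by (metis mset_map)
      then obtain p where p: "p permutes {..<length (map w ls)}" "permute_list p (map w ls) = map w (map \<sigma> [0..<\<alpha>])"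
        by (rule mset_eq_permutation)
      have g1: "g (map w (map \<sigma> [0..<\<alpha>])) = g (map w ls)"
      proof -
        have "map (\<lambda>i. map w ls ! p i) [0..<\<alpha>] = map w (map \<sigma> [0..<\<alpha>])"
          using p(2) ls(3) unfolding permute_list_def by simp
        moreover have "length (map w ls) = \<alpha>" using ls(3) by simp
        ultimately show ?thesis using sym[of "map w ls" p] p(1) ls(3) by metis
      qed
      have b1: "bij_betw \<sigma> {..<\<alpha>} S" using s(2) inj by (metis inj_on_imp_bij_betw inj_on_subset subset_UNIV)
      have img2: "\<sigma> ` {\<alpha>..<N} = {..<N} - S"
      proof -
        have "{\<alpha>..<N} = {..<N} - {..<\<alpha>}" by auto
        then have "\<sigma> ` {\<alpha>..<N} = \<sigma> ` {..<N} - \<sigma> ` {..<\<alpha>}" using image_set_diff[OF inj] by metis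
        then show ?thesis using permutes_image[OF s(1)] s(2) by simp
      qed
      have b2: "bij_betw \<sigma> {\<alpha>..<N} ({..<N} - S)" using img2 inj by (metis inj_on_imp_bij_betw inj_on_subset subset_UNIV)
      have "(\<Prod>i<\<alpha>. \<Prod>j\<in>{\<alpha>..<N}. (th * x (\<sigma> i) - x (\<sigma> j) / th) / (x (\<sigma> i) - x (\<sigma> j)))
          = (\<Prod>i<\<alpha>. (\<lambda>a. \<Prod>b\<in>{..<N}-S. G a b) (\<sigma> i))"
      proof (rule prod.cong[OF refl])
        fix i
        show "(\<Prod>j\<in>{\<alpha>..<N}. (th * x (\<sigma> i) - x (\<sigma> j) / th) / (x (\<sigma> i) - x (\<sigma> j)))
          = (\<lambda>a. \<Prod>b\<in>{..<N}-S. G a b) (\<sigma> i)"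
          unfolding G_def by (rule prod.reindex_bij_betw[OF b2])
      qed
      also have "\<dots> = (\<Prod>a\<in>S. \<Prod>b\<in>{..<N}-S. G a b)" by (rule prod.reindex_bij_betw[OF b1])
      finally show ?thesis unfolding T_def C_def m1 g1 by simp
    qed
    have Rv: "Mac_op N th \<alpha> (\<lambda>xs. g (map (\<lambda>y. 1 / (qh * y)) xs)) e x = C"
    proof -
      have "(\<Sum>\<sigma>\<in>{\<sigma>. \<sigma> permutes {..<N}}. if e = ind (\<sigma> ` {..<\<alpha>}) then T \<sigma> else 0)
          = (\<Sum>\<sigma>\<in>{\<sigma>\<in>{\<sigma>. \<sigma> permutes {..<N}}. \<sigma> ` {..<\<alpha>} = S}. T \<sigma>)"
      proof -
        have iff: "ind S = ind X \<longleftrightarrow> X = S" for X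
          unfolding ind_def by (auto simp: fun_eq_iff)
        have "(\<Sum>\<sigma>\<in>{\<sigma>. \<sigma> permutes {..<N}}. if e = ind (\<sigma> ` {..<\<alpha>}) then T \<sigma> else 0)
          = (\<Sum>\<sigma>\<in>{\<sigma>. \<sigma> permutes {..<N}}. if \<sigma> ` {..<\<alpha>} = S then T \<sigma> else 0)"
          unfolding eS iff by simp
        also have "\<dots> = (\<Sum>\<sigma>\<in>{\<sigma>\<in>{\<sigma>. \<sigma> permutes {..<N}}. \<sigma> ` {..<\<alpha>} = S}. T \<sigma>)"
          by (rule sum.inter_filter[symmetric]) (simp add: finite_permutations)
        finally show ?thesis .
      qed
      also have "\<dots> = (\<Sum>\<sigma>\<in>{\<sigma>. \<sigma> permutes {..<N} \<and> \<sigma> ` {..<\<alpha>} = S}. C)"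
        by (intro sum.cong) (auto simp: TC)
      also have "\<dots> = fact \<alpha> * fact (N - \<alpha>) * C"
        using card_perm_img[OF SU cardS assms(10)] by simp
      finally show ?thesis unfolding R by simp
    qed
    have Lv: "Phi_term N q t qh q2h (Etilde q t \<alpha> g) m w = th ^ (\<alpha> * (N - \<alpha>)) * C"
    proof -
      define Yf where "Yf = (\<lambda>a b. (w a - w b * t) / (w a - w b))"
      define c0 where "c0 = (-1 / (1 - 1/q) :: complex)"
      define K where "K = (t/q) powi ((int \<alpha> - int \<alpha>^2) div 2)"
      define NumP where "NumP = (\<Prod>a\<in>S. \<Prod>b\<in>S-{a}. w a - 1/q * w b)"
      define DenP where "DenP = (\<Prod>a\<in>S. \<Prod>b\<in>S-{a}. w a - w b)"
      define PhP where "PhP = (\<Prod>a\<in>S. \<Prod>b\<in>S-{a}. 1 / phi qh q2h (w a) (w b))"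
      define YSS where "YSS = (\<Prod>a\<in>S. \<Prod>b\<in>S-{a}. Yf a b)"
      define Ycr where "Ycr = (\<Prod>a\<in>S. \<Prod>b\<in>{..<N}-S. Yf a b)"
      define Q where "Q = (1 / (qh * q2h)) ^ (\<alpha> * (\<alpha> - 1))"
      have pm: "\<And>r f. (\<Prod>p<m r. f p) = (if r \<in> S then f 0 else 1)" by (simp add: mS)
      have pt0: "\<And>r. pt q w r 0 = w r" by (simp add: pt_def)
      have Y1: "(\<Prod>r<N. \<Prod>p<m r. Yfun N q t w r (pt q w r p)) = (\<Prod>r\<in>S. Yfun N q t w r (w r))"
        by (simp add: pm pt0 prod_ifS[OF _ SU])
      have Y2: "Yfun N q t w a (w a) = c0 * ((\<Prod>b\<in>S-{a}. Yf a b) * (\<Prod>b\<in>{..<N}-S. Yf a b))" if "a \<in> S" for a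
      proof -
        have "{..<N}-{a} = (S-{a}) \<union> ({..<N}-S)" using that SU by auto
        moreover have "(S-{a}) \<inter> ({..<N}-S) = {}" by auto
        ultimately have "(\<Prod>b\<in>{..<N}-{a}. Yf a b) = (\<Prod>b\<in>S-{a}. Yf a b) * (\<Prod>b\<in>{..<N}-S. Yf a b)"
          using fS by (simp add: prod.union_disjoint)
        then show ?thesis unfolding Yfun_def c0_def Yf_def by simp
      qed
      have Y: "(\<Prod>r<N. \<Prod>p<m r. Yfun N q t w r (pt q w r p)) = c0^\<alpha> * YSS * Ycr"
        unfolding Y1 YSS_def Ycr_def using Y2 cardS by (simp add: prod.distrib)
      have Z: "(\<Prod>r<N. \<Prod>p1<m r. \<Prod>p2\<in>{p1<..<m r}. 1 / zeta q t (pt q w r p1) (pt q w r p2)) = 1"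
      proof (intro prod.neutral ballI)
        fix r p1 p2 assume "p1 \<in> {..<m r}" "p2 \<in> {p1<..<m r}"
        then have False using mS[of r] by (auto split: if_splits)
        then show "1 / zeta q t (pt q w r p1) (pt q w r p2) = 1" by simp
      qed
      have pm2: "\<And>r1 r2 f. (\<Prod>p1<m r1. \<Prod>p2<m r2. f p1 p2) = (if r1 \<in> S \<and> r2 \<in> S then f 0 0 else 1)"
        by (simp add: pm)
      have Ph: "(\<Prod>r1<N. \<Prod>r2\<in>{..<N} - {r1}. \<Prod>p1<m r1. \<Prod>p2<m r2.
          1 / phi qh q2h (pt q w r1 p1) (pt q w r2 p2)) = PhP"
      proof -
        have "(\<Prod>r1<N. \<Prod>r2\<in>{..<N} - {r1}. \<Prod>p1<m r1. \<Prod>p2<m r2.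
          1 / phi qh q2h (pt q w r1 p1) (pt q w r2 p2)) =
          (\<Prod>r1<N. if r1 \<in> S then (\<Prod>b\<in>S-{r1}. 1 / phi qh q2h (w r1) (w b)) else 1)"
        proof (rule prod.cong[OF refl])
          fix r1 assume r1: "r1 \<in> {..<N}"
          show "(\<Prod>r2\<in>{..<N} - {r1}. \<Prod>p1<m r1. \<Prod>p2<m r2. 1 / phi qh q2h (pt q w r1 p1) (pt q w r2 p2)) =
            (if r1 \<in> S then (\<Prod>b\<in>S-{r1}. 1 / phi qh q2h (w r1) (w b)) else 1)"
          proof (cases "r1 \<in> S")
            case True
            have "(\<Prod>r2\<in>{..<N} - {r1}. \<Prod>p1<m r1. \<Prod>p2<m r2. 1 / phi qh q2h (pt q w r1 p1) (pt q w r2 p2))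
              = (\<Prod>r2\<in>{..<N} - {r1}. if r2 \<in> S-{r1} then 1 / phi qh q2h (w r1) (w r2) else 1)"
              using True by (intro prod.cong refl) (auto simp: pm2 pt0)
            also have "\<dots> = (\<Prod>b\<in>S-{r1}. 1 / phi qh q2h (w r1) (w b))"
              by (rule prod_ifS) (use SU in auto)
            finally show ?thesis using True by simp
          next
            case False
            then show ?thesis by (simp add: pm2)
          qed
        qed
        also have "\<dots> = PhP" unfolding PhP_def by (rule prod_ifS[OF _ SU]) simp
        finally show ?thesis .
      qed
      have ptsE: "pts N q m w = map w ls" unfolding ls_def by (rule pts01[OF mS])
      have NumEq: "(\<Prod>r<\<alpha>. \<Prod>s\<in>{..<\<alpha>}-{r}. map w ls ! r - 1/q * map w ls ! s) = NumP"
        unfolding NumP_def using reidx_pairs_map[OF ls(1) ls(3), of "\<lambda>u v. u - 1/q*v" w] ls(2) by simp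
      have DenEq: "(\<Prod>r<\<alpha>. \<Prod>s\<in>{..<\<alpha>}-{r}. map w ls ! r - map w ls ! s) = DenP"
        unfolding DenP_def using reidx_pairs_map[OF ls(1) ls(3), of "\<lambda>u v. u - v" w] ls(2) by simp
      have E: "Etilde q t \<alpha> g (pts N q m w) = K * (1/q - 1)^\<alpha> * NumP * g (map w ls) / DenP"
        unfolding ptsE Etilde_def NumEq DenEq K_def by simp
      have wne: "w a \<noteq> w b" "q * w a \<noteq> w b" "(1/t) * w a \<noteq> w b"
        if "a < N" "b < N" "a \<noteq> b" for a b
      proof -
        have xa: "x a \<noteq> 0" and xb: "x b \<noteq> 0" using gx that by auto
        show "w a \<noteq> w b"
        proof
          assume "w a = w b"
          then have "x a = x b" using xa xb qh0 by (simp add: w_def field_simps)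
          then show False using gx1(1)[OF that] by simp
        qed
        show "q * w a \<noteq> w b"
        proof
          assume "q * w a = w b"
          then have "x a = q * x b" using xa xb qh0 by (simp add: w_def field_simps)
          then show False using gx1(2)[OF that] by simp
        qed
        show "(1/t) * w a \<noteq> w b"
        proof
          assume "(1/t) * w a = w b"
          then have "x b = t * x a" using xa xb qh0 t0 by (simp add: w_def field_simps)
          then show False using gx1(3)[of b a] that by simp
        qed
      qed
      have pw: "Yf a b * ((w a - 1/q * w b) / (w a - w b)) * (1 / phi qh q2h (w a) (w b)) = 1/(qh*q2h)"
        if "a < N" "b < N" "a \<noteq> b" for a b
        using pw1[OF qh0 q2h0 wne(1)[OF that]] wne(2,3)[OF that] unfolding Yf_def
        by (simp add: assms(6) assms(8))
      have comb: "YSS * (NumP / DenP) * PhP = Q"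
      proof -
        have "YSS * (NumP / DenP) * PhP =
            (\<Prod>a\<in>S. \<Prod>b\<in>S-{a}. Yf a b * ((w a - 1/q * w b) / (w a - w b)) * (1 / phi qh q2h (w a) (w b)))"
          unfolding YSS_def NumP_def DenP_def PhP_def by (simp add: prod.distrib prod_dividef)
        also have "\<dots> = (\<Prod>a\<in>S. \<Prod>b\<in>S-{a}. 1/(qh*q2h))"
          using SU by (intro prod.cong refl pw) auto
        also have "\<dots> = (\<Prod>a\<in>S. (1/(qh*q2h)) ^ (\<alpha> - 1))"
          using cardS fS by (intro prod.cong refl) (simp add: card_Diff_singleton)
        also have "\<dots> = Q" unfolding Q_def using cardS by (simp add: power_mult[symmetric] mult.commute)
        finally show ?thesis .
      qed
      have pw2: "Yf a b = th * G a b" if "a < N" "b < N" "a \<noteq> b" for a b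
      proof -
        have xa: "x a \<noteq> 0" and xb: "x b \<noteq> 0" using gx that by auto
        have d: "x a - x b \<noteq> 0" using gx1(1)[OF that] by simp
        have d2: "x b - x a \<noteq> 0" using gx1(1)[OF that] by simp
        have "Yf a b = (x b - t * x a) / (x b - x a)"
          unfolding Yf_def w_def using xa xb qh0 d d2 by (simp add: field_simps)
        also have "\<dots> = th * G a b"
          unfolding G_def using th0 d d2 assms(7)[symmetric] by (simp add: field_simps power2_eq_square)
        finally show ?thesis .
      qed
      have cross: "Ycr = th ^ (\<alpha> * (N - \<alpha>)) * (\<Prod>a\<in>S. \<Prod>b\<in>{..<N}-S. G a b)"
      proof -
        have cU: "card ({..<N} - S) = N - \<alpha>" using SU cardS fS by (simp add: card_Diff_subset)
        have "Ycr = (\<Prod>a\<in>S. \<Prod>b\<in>{..<N}-S. th * G a b)"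
          unfolding Ycr_def using SU by (intro prod.cong refl pw2) auto
        also have "\<dots> = (\<Prod>a\<in>S. th ^ (N - \<alpha>) * (\<Prod>b\<in>{..<N}-S. G a b))"
          using cU by (simp add: prod.distrib)
        also have "\<dots> = th ^ (\<alpha> * (N - \<alpha>)) * (\<Prod>a\<in>S. \<Prod>b\<in>{..<N}-S. G a b)"
          using cardS by (simp add: prod.distrib power_mult[symmetric] mult.commute)
        finally show ?thesis .
      qed
      have const: "c0^\<alpha> * (1/q - 1)^\<alpha> * K * Q = 1"
      proof -
        have c01: "c0 * (1/q - 1) = 1" unfolding c0_def using q0 q1 by (simp add: field_simps)
        define k where "k = \<alpha> * (\<alpha> - 1) div 2"
        have ev: "even (\<alpha> * (\<alpha> - 1))" by (cases "even \<alpha>") auto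
        then have k2: "\<alpha> * (\<alpha> - 1) = 2 * k" unfolding k_def by simp
        have "int \<alpha>^2 = int \<alpha> + int (\<alpha> * (\<alpha> - 1))" using assms(9)
          by (cases \<alpha>) (simp_all add: power2_eq_square algebra_simps)
        moreover have "int (\<alpha> * (\<alpha> - 1)) = 2 * int k" using k2 by simp
        ultimately have "int \<alpha> - int \<alpha>^2 = 2 * (- int k)" by simp
        then have "(int \<alpha> - int \<alpha>^2) div 2 = - int k" by simp
        then have K: "K = inverse ((t/q) ^ k)" unfolding K_def by (simp add: power_int_minus)
        have "Q = ((1 / (qh * q2h))^2) ^ k" unfolding Q_def k2 by (simp add: power_mult)
        also have "(1 / (qh * q2h))^2 = 1 / (q * (1/t))"
          by (simp only: power_divide power_mult_distrib power_one assms(6) assms(8))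
        also have "1 / (q * (1/t)) = t/q" using q0 t0 by simp
        finally have Q: "Q = (t/q)^k" .
        have tq: "(t/q)^k \<noteq> 0" using q0 t0 by simp
        have "c0^\<alpha> * (1/q - 1)^\<alpha> = 1" using c01 by (simp add: power_mult_distrib[symmetric])
        then show ?thesis using K Q tq by simp
      qed
      have "Phi_term N q t qh q2h (Etilde q t \<alpha> g) m w =
          (c0^\<alpha> * YSS * Ycr) * (K * (1/q - 1)^\<alpha> * NumP * g (map w ls) / DenP) * 1 * PhP"
        unfolding Phi_term_def Y E Z Ph ..
      also have "\<dots> = (c0^\<alpha> * (1/q - 1)^\<alpha> * K) * (YSS * (NumP / DenP) * PhP) * Ycr * g (map w ls)"
        by (simp add: divide_inverse mult_ac)
      also have "\<dots> = th ^ (\<alpha> * (N - \<alpha>)) * C"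
        unfolding comb cross C_def using const by (simp add: mult_ac)
      finally show ?thesis .
    qed
    show ?thesis using L Rv Lv c by simp
  qed
qed

end
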